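(* Let $G$ be a finitely generated residually finite group with profinite completion $\hat G$, let $H$ be a finite group, let $\bar w\in F^r(y_1,\dots,y_k,x_1,\dots,x_n)\cap Sys(Fin)$, and let $\bar a\in\hat G^k$. Then there exists $\bar u\in\hat G^n$ such that for every $N\in\mathfrak{M}$ and every $\bar f\in (H^{G_N})^k$ there exists $\bar\phi\in (H^{G_N})^n$ with $\bar w((\bar f,\bar a_N),(\bar\phi,\bar u_N))=1$ in $H\wr G_N$. (Such $\bar u$ is called an $(H,\bar a)$-universal solution of $\bar w$.)
   Context: $F=F(\bar y,\bar x)$ is the free group on constant symbols $y_1,\dots,y_k$ and variable symbols $x_1,\dots,x_n$; $\bar w\in F^r$ is a system of equations, evaluated by substitution in any group. $Sys(Fin)$ is the set of finite systems $\bar w$ solvable in every finite group $Q$, i.e. for every $\bar c\in Q^k$ there is $\bar z\in Q^n$ with $\bar w(\bar c,\bar z)=1$. $\mathfrak{M}$ is the set of normal subgroups of finite index of $G$; for $N\in\mathfrak{M}$, $G_N=G/N$, and $\eta_N:\hat G\to G_N$ is the canonical epimorphism from the profinite completion $\hat G=\varprojlim G_N$. For $g\in\hat G$, $g_N=\eta_N(g)$, and for tuples $\bar g=(g_1,\dots,g_m)$, $\bar g_N=((g_1)_N,\dots,(g_m)_N)$. For $\bar f=(f_1,\dots,f_m)\in (H^{G_N})^m$ and $\bar g\in G_N^m$, $(\bar f,\bar g)=((f_1,g_1),\dots,(f_m,g_m))\in (H\wr G_N)^m$. The wreath product $H\wr Q$ is $H^Q\rtimes Q$ with $(g.f)(x)=f(xg)$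 and $(f,g)(f',g')=(f\,(g.f'),gg')$. *)

theory Defs
  imports "HOL-Algebra.Algebra" "HOL-Library.FuncSet"
begin

text \<open>Words of the free group F(y_1..y_k, x_1..x_n): a letter is (Inl i, e) for the
constant y_i (i < k) or (Inr j, e) for the variable x_j (j < n); e = True means the
generator itself, e = False its inverse. Indices are 0-based.\<close>

type_synonym letter = "(nat + nat) \<times> bool"
type_synonym word = "letter list"

definition word_in :: "nat \<Rightarrow> nat \<Rightarrow> word \<Rightarrow> bool" where
  "word_in k n w \<longleftrightarrow>
     (\<forall>l \<in> set w. case fst l of Inl i \<Rightarrow> i < k | Inr j \<Rightarrow> j < n)"

fun eval_word :: "('g, 'b) monoid_scheme \<Rightarrow> (nat \<Rightarrow> 'g) \<Rightarrow> (nat \<Rightarrow> 'g) \<Rightarrow> word \<Rightarrow> 'g" where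
  "eval_word Q c z [] = \<one>\<^bsub>Q\<^esub>"
| "eval_word Q c z ((s, e) # w) =
     (let g = (case s of Inl i \<Rightarrow> c i | Inr j \<Rightarrow> z j)
      in (if e then g else inv\<^bsub>Q\<^esub> g) \<otimes>\<^bsub>Q\<^esub> eval_word Q c z w)"

text \<open>Sys(Fin): systems solvable in every finite group. Every finite group is isomorphic
to one whose carrier is a set of naturals, so quantifying over groups on nat suffices.\<close>
definition sys_fin :: "nat \<Rightarrow> nat \<Rightarrow> word list \<Rightarrow> bool" where
  "sys_fin k n ws \<longleftrightarrow>
     (\<forall>Q :: nat monoid. group Q \<and> finite (carrier Q) \<longrightarrow>
        (\<forall>c. (\<forall>i<k. c i \<in> carrier Q) \<longrightarrow>
           (\<exists>z. (\<forall>j<n. z j \<in> carrier Q) \<and> (\<forall>w \<in> set ws. eval_word Q c z w = \<one>\<^bsub>Q\<^esub>))))"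

definition finitely_generated :: "('a, 'b) monoid_scheme \<Rightarrow> bool" where
  "finitely_generated G \<longleftrightarrow> (\<exists>S. finite S \<and> S \<subseteq> carrier G \<and> generate G S = carrier G)"

definition fin_index_normals :: "('a, 'b) monoid_scheme \<Rightarrow> 'a set set" where
  "fin_index_normals G = {N. N \<lhd> G \<and> finite (rcosets\<^bsub>G\<^esub> N)}"

definition residually_finite :: "('a, 'b) monoid_scheme \<Rightarrow> bool" where
  "residually_finite G \<longleftrightarrow>
     (\<forall>g \<in> carrier G. g \<noteq> \<one>\<^bsub>G\<^esub> \<longrightarrow> (\<exists>N \<in> fin_index_normals G. g \<notin> N))"

text \<open>Profinite completion (as a set): the inverse limit of the G/N, N in \<frak>M, i.e.
compatible families (g_N) with g_N in G/N and g_N mapped to g_N' whenever N \<subseteq> N'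
(the canonical map G/N \<rightarrow> G/N' sends a coset to the unique N'-coset containing it).
The projection \<eta>_N is evaluation at N.\<close>
definition profinite_completion :: "('a, 'b) monoid_scheme \<Rightarrow> ('a set \<Rightarrow> 'a set) set" where
  "profinite_completion G =
     {g. (\<forall>N \<in> fin_index_normals G. g N \<in> carrier (G Mod N))
       \<and> (\<forall>N \<in> fin_index_normals G. \<forall>N' \<in> fin_index_normals G. N \<subseteq> N' \<longrightarrow> g N \<subseteq> g N')
       \<and> (\<forall>N. N \<notin> fin_index_normals G \<longrightarrow> g N = undefined)}"

text \<open>Wreath product H \<wr> Q = H^Q \<rtimes> Q with (g.f)(x) = f(xg),
(f,g)(f',g') = (f (g.f'), gg').\<close>
definition wreath :: "('h, 'c) monoid_scheme \<Rightarrow> ('q, 'd) monoid_scheme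
                       \<Rightarrow> (('q \<Rightarrow> 'h) \<times> 'q) monoid" where
  "wreath H Q =
     \<lparr>carrier = (carrier Q \<rightarrow>\<^sub>E carrier H) \<times> carrier Q,
      monoid.mult = (\<lambda>(f, g) (f', g'). ((\<lambda>x \<in> carrier Q. f x \<otimes>\<^bsub>H\<^esub> f' (x \<otimes>\<^bsub>Q\<^esub> g)), g \<otimes>\<^bsub>Q\<^esub> g')),
      one = ((\<lambda>x \<in> carrier Q. \<one>\<^bsub>H\<^esub>), \<one>\<^bsub>Q\<^esub>)\<rparr>"

end

theory Submission
  imports Defs "HOL-Algebra.Weak_Morphisms" "HOL-Analysis.Function_Topology" "HOL-Analysis.Product_Topology"
begin


lemma eval_word_cong:
  assumes "word_in k n w" "\<And>i. i<k \<Longrightarrow> c i = c' i" "\<And>j. j<n \<Longrightarrow> z j = z' j"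
  shows "eval_word Q c z w = eval_word Q c' z' w"
  using assms by (induction Q c z w rule: eval_word.induct) (auto simp: word_in_def split: sum.splits)

lemma eval_word_closed:
  assumes "group Q" "word_in k n w" "\<forall>i<k. c i \<in> carrier Q" "\<forall>j<n. z j \<in> carrier Q"
  shows "eval_word Q c z w \<in> carrier Q"
  using assms by (induction Q c z w rule: eval_word.induct)
    (auto simp: word_in_def Let_def split: sum.splits intro!: monoid.m_closed group.is_monoid group.inv_closed)

lemma eval_word_hom:
  assumes "group A" "group B" "h \<in> hom A B" "word_in k n w" "\<forall>i<k. c i \<in> carrier A" "\<forall>j<n. z j \<in> carrier A"
  shows "h (eval_word A c z w) = eval_word B (h \<circ> c) (h \<circ> z) w"
  using assms
proof (induction A c z w rule: eval_word.induct)
  case (1 Q c z)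
  then show ?case by (simp add: hom_one)
next
  case (2 Q c z s e w)
  interpret gh: group_hom Q B h using 2 by (simp add: group_hom_def group_hom_axioms_def)
  have ww: "word_in k n w" and sc: "case s of Inl i \<Rightarrow> i < k | Inr j \<Rightarrow> j < n"
    using 2(5) by (auto simp: word_in_def)
  have IH: "h (eval_word Q c z w) = eval_word B (h \<circ> c) (h \<circ> z) w"
    using 2 ww by blast
  have gc: "(case s of Inl i \<Rightarrow> c i | Inr j \<Rightarrow> z j) \<in> carrier Q"
    using sc 2(6,7) by (auto split: sum.splits)
  have gh: "h (case s of Inl i \<Rightarrow> c i | Inr j \<Rightarrow> z j) = (case s of Inl i \<Rightarrow> (h \<circ> c) i | Inr j \<Rightarrow> (h \<circ> z) j)"
    by (auto split: sum.splits)
  have ec: "eval_word Q c z w \<in> carrier Q" using eval_word_closed[OF 2(2) ww] 2(6,7) by blast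
  show ?case using gc ec IH sc 2(6,7)
    by (cases s) (auto simp: Let_def gh.hom_mult comp_def)
qed

lemma sys_fin_any:
  fixes Q :: "('q,'r) monoid_scheme"
  assumes "sys_fin k n ws" "group Q" "finite (carrier Q)" "\<forall>w\<in>set ws. word_in k n w"
    "\<forall>i<k. c i \<in> carrier Q"
  shows "\<exists>z. (\<forall>j<n. z j \<in> carrier Q) \<and> (\<forall>w\<in>set ws. eval_word Q c z w = \<one>\<^bsub>Q\<^esub>)"
proof -
  obtain e :: "'q \<Rightarrow> nat" and m where em: "e ` carrier Q = {i. i<m}" "inj_on e (carrier Q)"
    using finite_imp_inj_to_nat_seg[OF assms(3)] by blast
  define Q' where "Q' = image_group e Q"
  have gQ': "group Q'" unfolding Q'_def using group.inj_imp_image_group_is_group[OF assms(2) em(2)] .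
  have iso: "e \<in> iso Q Q'" unfolding Q'_def by (rule inj_imp_image_group_iso[OF em(2)])
  then have hom: "e \<in> hom Q Q'" by (simp add: iso_def)
  have cQ': "carrier Q' = e ` carrier Q" unfolding Q'_def by (simp add: image_group_carrier)
  have fQ': "finite (carrier Q')" using cQ' assms(3) by simp
  have "\<forall>i<k. (e \<circ> c) i \<in> carrier Q'" using assms(5) cQ' by auto
  then obtain z' where z': "\<forall>j<n. z' j \<in> carrier Q'" "\<forall>w\<in>set ws. eval_word Q' (e \<circ> c) z' w = \<one>\<^bsub>Q'\<^esub>"
    using assms(1) gQ' fQ' unfolding sys_fin_def by blast
  define z where "z = (\<lambda>j. inv_into (carrier Q) e (z' j))"
  have zc: "\<forall>j<n. z j \<in> carrier Q" using z'(1) cQ' by (auto simp: z_def inv_into_into)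
  have ez: "\<forall>j<n. (e \<circ> z) j = z' j" using z'(1) cQ' by (auto simp: z_def f_inv_into_f)
  show ?thesis
  proof (intro exI conjI allI impI ballI)
    fix j assume "j < n" then show "z j \<in> carrier Q" using zc by blast
  next
    fix w assume w: "w \<in> set ws"
    have wi: "word_in k n w" using w assms(4) by blast
    have "e (eval_word Q c z w) = eval_word Q' (e \<circ> c) (e \<circ> z) w"
      by (rule eval_word_hom[OF assms(2) gQ' hom wi assms(5) zc])
    also have "\<dots> = eval_word Q' (e \<circ> c) z' w" by (rule eval_word_cong[OF wi]) (use ez in auto)
    also have "\<dots> = \<one>\<^bsub>Q'\<^esub>" using z'(2) w by blast
    also have "\<dots> = e \<one>\<^bsub>Q\<^esub>" unfolding Q'_def by (simp add: image_group_one)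
    finally have "e (eval_word Q c z w) = e \<one>\<^bsub>Q\<^esub>" .
    moreover have "eval_word Q c z w \<in> carrier Q" using eval_word_closed[OF assms(2) wi assms(5) zc] .
    ultimately show "eval_word Q c z w = \<one>\<^bsub>Q\<^esub>"
      using em(2) group.is_monoid[OF assms(2)] by (meson inj_onD monoid.one_closed)
  qed
qed

definition wr :: "('h,'c) monoid_scheme \<Rightarrow> ('q,'d) monoid_scheme \<Rightarrow> 'x set \<Rightarrow> ('x \<Rightarrow> 'q \<Rightarrow> 'x) \<Rightarrow> (('x \<Rightarrow> 'h) \<times> 'q) monoid" where
 "wr H Q Y0 act = \<lparr>carrier = (Y0 \<rightarrow>\<^sub>E carrier H) \<times> carrier Q,
      monoid.mult = (\<lambda>(f, g) (f', g'). ((\<lambda>x \<in> Y0. f x \<otimes>\<^bsub>H\<^esub> f' (act x g)), g \<otimes>\<^bsub>Q\<^esub> g')),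
      one = ((\<lambda>x \<in> Y0. \<one>\<^bsub>H\<^esub>), \<one>\<^bsub>Q\<^esub>)\<rparr>"

lemma wreath_wr: "wreath H Q = wr H Q (carrier Q) (\<lambda>x g. x \<otimes>\<^bsub>Q\<^esub> g)"
  by (simp add: wreath_def wr_def)

lemma wr_group:
  assumes H: "group H" and Q: "group Q"
    and a1: "\<And>x g. x\<in>Y0 \<Longrightarrow> g \<in> carrier Q \<Longrightarrow> act x g \<in> Y0"
    and a2: "\<And>x. x\<in>Y0 \<Longrightarrow> act x \<one>\<^bsub>Q\<^esub> = x"
    and a3: "\<And>x g g'. x\<in>Y0 \<Longrightarrow> g \<in> carrier Q \<Longrightarrow> g' \<in> carrier Q \<Longrightarrow> act (act x g) g' = act x (g \<otimes>\<^bsub>Q\<^esub> g')"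
  shows "group (wr H Q Y0 act)"
proof -
  interpret H: group H by (rule H)
  interpret Q: group Q by (rule Q)
  show ?thesis
  proof (rule groupI)
    fix x y assume "x \<in> carrier (wr H Q Y0 act)" "y \<in> carrier (wr H Q Y0 act)"
    then show "x \<otimes>\<^bsub>wr H Q Y0 act\<^esub> y \<in> carrier (wr H Q Y0 act)"
      using a1 by (auto simp: wr_def PiE_iff)
  next
    show "\<one>\<^bsub>wr H Q Y0 act\<^esub> \<in> carrier (wr H Q Y0 act)" by (auto simp: wr_def)
  next
    fix x y z assume xyz: "x \<in> carrier (wr H Q Y0 act)" "y \<in> carrier (wr H Q Y0 act)" "z \<in> carrier (wr H Q Y0 act)"
    obtain f g where x: "x = (f,g)" by fastforce
    obtain f' g' where y: "y = (f',g')" by fastforce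
    obtain f'' g'' where z: "z = (f'',g'')" by fastforce
    have fs: "f \<in> Y0 \<rightarrow>\<^sub>E carrier H" "f' \<in> Y0 \<rightarrow>\<^sub>E carrier H" "f'' \<in> Y0 \<rightarrow>\<^sub>E carrier H"
      and gs: "g \<in> carrier Q" "g' \<in> carrier Q" "g'' \<in> carrier Q"
      using xyz x y z by (auto simp: wr_def)
    show "x \<otimes>\<^bsub>wr H Q Y0 act\<^esub> y \<otimes>\<^bsub>wr H Q Y0 act\<^esub> z = x \<otimes>\<^bsub>wr H Q Y0 act\<^esub> (y \<otimes>\<^bsub>wr H Q Y0 act\<^esub> z)"
      using fs gs a1 a3 by (auto simp: x y z wr_def Q.m_assoc H.m_assoc PiE_iff intro!: ext)
  next
    fix x assume "x \<in> carrier (wr H Q Y0 act)"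
    then obtain f g where x: "x = (f,g)" "f \<in> Y0 \<rightarrow>\<^sub>E carrier H" "g \<in> carrier Q"
      by (auto simp: wr_def)
    show "\<one>\<^bsub>wr H Q Y0 act\<^esub> \<otimes>\<^bsub>wr H Q Y0 act\<^esub> x = x"
      using x a2 by (auto simp: wr_def PiE_iff extensional_def intro!: ext)
  next
    fix x assume "x \<in> carrier (wr H Q Y0 act)"
    then obtain f g where x: "x = (f,g)" "f \<in> Y0 \<rightarrow>\<^sub>E carrier H" "g \<in> carrier Q"
      by (auto simp: wr_def)
    show "\<exists>y\<in>carrier (wr H Q Y0 act). y \<otimes>\<^bsub>wr H Q Y0 act\<^esub> x = \<one>\<^bsub>wr H Q Y0 act\<^esub>"
    proof (intro bexI)
      show "((\<lambda>y\<in>Y0. inv\<^bsub>H\<^esub> f (act y (inv\<^bsub>Q\<^esub> g))), inv\<^bsub>Q\<^esub> g) \<otimes>\<^bsub>wr H Q Y0 act\<^esub> x = \<one>\<^bsub>wr H Q Y0 act\<^esub>"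
        using x a1 by (auto simp: wr_def PiE_iff intro!: ext)
      show "((\<lambda>y\<in>Y0. inv\<^bsub>H\<^esub> f (act y (inv\<^bsub>Q\<^esub> g))), inv\<^bsub>Q\<^esub> g) \<in> carrier (wr H Q Y0 act)"
        using x a1 by (auto simp: wr_def PiE_iff)
    qed
  qed
qed

lemma wr_hom:
  assumes "p \<in> hom Q1 Q2" "\<And>y. y\<in>Y \<Longrightarrow> \<iota> y \<in> Y0"
    "\<And>y q. y\<in>Y \<Longrightarrow> q \<in> carrier Q2 \<Longrightarrow> act2 y q \<in> Y"
    "\<And>y g. y\<in>Y \<Longrightarrow> g\<in>carrier Q1 \<Longrightarrow> act1 (\<iota> y) g = \<iota> (act2 y (p g))"
  shows "(\<lambda>(f,g). ((\<lambda>y\<in>Y. f (\<iota> y)), p g)) \<in> hom (wr H Q1 Y0 act1) (wr H Q2 Y act2)"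
proof -
  have pc: "\<And>g. g \<in> carrier Q1 \<Longrightarrow> p g \<in> carrier Q2" using assms(1) by (rule hom_in_carrier)
  show ?thesis using assms pc unfolding hom_def
    by (auto simp: wr_def PiE_iff intro!: ext)
qed

abbreviation FN where "FN G \<equiv> fin_index_normals G"

lemma fin_normals_basic:
  assumes "group G" "N \<in> fin_index_normals G"
  shows "group (G Mod N)" "finite (carrier (G Mod N))" "N \<lhd> G" "subgroup N G"
    "carrier (G Mod N) = rcosets\<^bsub>G\<^esub> N"
proof -
  have n: "N \<lhd> G" and f: "finite (rcosets\<^bsub>G\<^esub> N)" using assms(2) by (auto simp: fin_index_normals_def)
  have c: "carrier (G Mod N) = rcosets\<^bsub>G\<^esub> N" by (simp add: FactGroup_def)
  show "group (G Mod N)" using n by (rule normal.factorgroup_is_group)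
  show "finite (carrier (G Mod N))" using c f by simp
  show "N \<lhd> G" by (rule n)
  show "subgroup N G" using n by (rule normal_imp_subgroup)
  show "carrier (G Mod N) = rcosets\<^bsub>G\<^esub> N" by (rule c)
qed

lemma setmult_coset_sub:
  fixes G (structure)
  assumes "group G" "subgroup M G" "subgroup N G" "M \<subseteq> N" "x \<in> carrier G"
  shows "N <#>\<^bsub>G\<^esub> (M #>\<^bsub>G\<^esub> x) = N #>\<^bsub>G\<^esub> x"
proof -
  interpret group G by fact
  have Ns: "N \<subseteq> carrier G" "M \<subseteq> carrier G" using assms(2,3) subgroup.subset by blast+
  show ?thesis
  proof
    show "N <#> (M #> x) \<subseteq> N #> x"
    proof
      fix y assume "y \<in> N <#> (M #> x)"
      then obtain n m where nm: "n \<in> N" "m \<in> M" "y = n \<otimes> (m \<otimes> x)"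
        unfolding set_mult_def r_coset_def by blast
      have "n \<in> carrier G" "m \<in> carrier G" using nm Ns by blast+
      then have "(n \<otimes> m) \<otimes> x = n \<otimes> (m \<otimes> x)" using assms(5) by (intro m_assoc)
      then have "y = (n \<otimes> m) \<otimes> x" using nm(3) by metis
      moreover have "n \<otimes> m \<in> N"
        using subgroup.m_closed[OF assms(3) nm(1)] nm(2) assms(4) by blast
      ultimately show "y \<in> N #> x" unfolding r_coset_def by blast
    qed
  next
    show "N #> x \<subseteq> N <#> (M #> x)"
    proof
      fix y assume "y \<in> N #> x"
      then obtain n where n: "n \<in> N" "y = n \<otimes> x" unfolding r_coset_def by blast
      have "\<one> \<otimes> x \<in> M #> x" unfolding r_coset_def using subgroup.one_closed[OF assms(2)] by blast
      moreover have "y = n \<otimes> (\<one> \<otimes> x)" using n assms(5) by simp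
      ultimately show "y \<in> N <#> (M #> x)" using n(1) unfolding set_mult_def by blast
    qed
  qed
qed

lemma proj_hom:
  fixes G (structure)
  assumes "group G" "M \<lhd> G" "N \<lhd> G" "M \<subseteq> N"
  shows "(\<lambda>C. N <#>\<^bsub>G\<^esub> C) \<in> hom (G Mod M) (G Mod N)"
proof -
  interpret group G by fact
  have sM: "subgroup M G" and sN: "subgroup N G" using assms normal_imp_subgroup by blast+
  show ?thesis unfolding hom_def
  proof (intro CollectI conjI ballI)
    show "(\<lambda>C. N <#> C) \<in> carrier (G Mod M) \<rightarrow> carrier (G Mod N)"
    proof
      fix C assume "C \<in> carrier (G Mod M)"
      then obtain x where x: "x \<in> carrier G" "C = M #> x" by (auto simp: FactGroup_def RCOSETS_def)
      then show "N <#> C \<in> carrier (G Mod N)"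
        using setmult_coset_sub[OF assms(1) sM sN assms(4) x(1)] sN
        by (auto simp: FactGroup_def RCOSETS_def)
    qed
  next
    fix C1 C2 assume C: "C1 \<in> carrier (G Mod M)" "C2 \<in> carrier (G Mod M)"
    then obtain x y where x: "x \<in> carrier G" "C1 = M #> x" and y: "y \<in> carrier G" "C2 = M #> y"
      by (auto simp: FactGroup_def RCOSETS_def)
    have "C1 \<otimes>\<^bsub>G Mod M\<^esub> C2 = M #> (x \<otimes> y)" using x y normal.rcos_sum[OF assms(2)] by simp
    then have "N <#> (C1 \<otimes>\<^bsub>G Mod M\<^esub> C2) = N #> (x \<otimes> y)"
      using setmult_coset_sub[OF assms(1) sM sN assms(4)] x y by simp
    also have "\<dots> = (N #> x) <#> (N #> y)" using normal.rcos_sum[OF assms(3)] x y by simp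
    also have "\<dots> = (N <#> C1) \<otimes>\<^bsub>G Mod N\<^esub> (N <#> C2)"
      using setmult_coset_sub[OF assms(1) sM sN assms(4)] x y by simp
    finally show "N <#> (C1 \<otimes>\<^bsub>G Mod M\<^esub> C2) = (N <#> C1) \<otimes>\<^bsub>G Mod N\<^esub> (N <#> C2)" .
  qed
qed

lemma proj_profinite:
  fixes G (structure)
  assumes "group G" "g \<in> profinite_completion G" "M \<in> FN G" "N \<in> FN G" "M \<subseteq> N"
  shows "N <#>\<^bsub>G\<^esub> g M = g N"
proof -
  interpret group G by fact
  have sM: "subgroup M G" and sN: "subgroup N G" using assms fin_normals_basic by blast+
  have gM: "g M \<in> rcosets M" and gN: "g N \<in> rcosets N" and sub: "g M \<subseteq> g N"
  proof -
    have p1: "\<forall>N\<in>FN G. g N \<in> carrier (G Mod N)" and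
      p2: "\<forall>N\<in>FN G. \<forall>N'\<in>FN G. N \<subseteq> N' \<longrightarrow> g N \<subseteq> g N'"
      using assms(2) unfolding profinite_completion_def by blast+
    show "g M \<in> rcosets M" using p1 assms(3) fin_normals_basic(5)[OF assms(1,3)] by blast
    show "g N \<in> rcosets N" using p1 assms(4) fin_normals_basic(5)[OF assms(1,4)] by blast
    show "g M \<subseteq> g N" using p2 assms(3-5) by blast
  qed
  obtain x where x: "x \<in> carrier G" "g M = M #> x" using gM by (auto simp: RCOSETS_def)
  obtain y where y: "y \<in> carrier G" "g N = N #> y" using gN by (auto simp: RCOSETS_def)
  have "x \<in> g N" using sub x rcos_self[OF x(1) sM] by blast
  then have "N #> y = N #> x" using repr_independence[of x N y] y sN by simp
  then show ?thesis using x y setmult_coset_sub[OF assms(1) sM sN assms(5) x(1)] by simp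
qed

lemma fin_normals_Int:
  fixes G (structure)
  assumes "group G" "N1 \<in> FN G" "N2 \<in> FN G" shows "N1 \<inter> N2 \<in> FN G"
proof -
  interpret group G by fact
  have s1: "subgroup N1 G" and s2: "subgroup N2 G" and n1: "N1 \<lhd> G" and n2: "N2 \<lhd> G"
    using assms fin_normals_basic by blast+
  have f1: "finite (rcosets N1)" and f2: "finite (rcosets N2)" using assms(2,3) by (auto simp: fin_index_normals_def)
  have nI: "N1 \<inter> N2 \<lhd> G"
  proof (rule normal_invI)
    show "subgroup (N1 \<inter> N2) G" using subgroups_Inter_pair[OF s1 s2] .
    fix x h assume "x \<in> carrier G" "h \<in> N1 \<inter> N2"
    then show "x \<otimes> h \<otimes> inv x \<in> N1 \<inter> N2"
      using normal.inv_op_closed2[OF n1] normal.inv_op_closed2[OF n2] by blast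
  qed
  have "rcosets (N1 \<inter> N2) \<subseteq> (\<lambda>(A,B). A \<inter> B) ` ((rcosets N1) \<times> (rcosets N2))"
  proof
    fix C assume "C \<in> rcosets (N1 \<inter> N2)"
    then obtain x where x: "x \<in> carrier G" "C = (N1 \<inter> N2) #> x" by (auto simp: RCOSETS_def)
    have "(N1 \<inter> N2) #> x = (N1 #> x) \<inter> (N2 #> x)"
    proof
      show "(N1 \<inter> N2) #> x \<subseteq> (N1 #> x) \<inter> (N2 #> x)" unfolding r_coset_def by blast
      show "(N1 #> x) \<inter> (N2 #> x) \<subseteq> (N1 \<inter> N2) #> x"
      proof
        fix y assume "y \<in> (N1 #> x) \<inter> (N2 #> x)"
        then obtain a b where ab: "a \<in> N1" "b \<in> N2" "y = a \<otimes> x" "y = b \<otimes> x" unfolding r_coset_def by blast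
        have ac: "a \<in> carrier G" "b \<in> carrier G"
          using subgroup.mem_carrier[OF s1 ab(1)] subgroup.mem_carrier[OF s2 ab(2)] by auto
        have "a \<otimes> x = b \<otimes> x" using ab(3,4) by simp
        then have "a = b" by (rule r_cancel) (use ac x(1) in auto)
        then show "y \<in> (N1 \<inter> N2) #> x" using ab unfolding r_coset_def by blast
      qed
    qed
    moreover have "N1 #> x \<in> rcosets N1" "N2 #> x \<in> rcosets N2"
      using rcosetsI[OF subgroup.subset[OF s1] x(1)] rcosetsI[OF subgroup.subset[OF s2] x(1)] by auto
    ultimately show "C \<in> (\<lambda>(A,B). A \<inter> B) ` ((rcosets N1) \<times> (rcosets N2))"
      using x by (intro image_eqI[where x="(N1 #> x, N2 #> x)"]) auto
  qed
  then have "finite (rcosets (N1 \<inter> N2))" using f1 f2 by (meson finite_SigmaI finite_imageI finite_subset)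
  then show ?thesis using nI by (simp add: fin_index_normals_def)
qed

lemma carrier_FN:
  fixes G (structure)
  assumes "group G" shows "carrier G \<in> FN G"
proof -
  interpret group G by fact
  have n: "carrier G \<lhd> G" by (rule normal_invI) (auto intro: subgroup_self)
  have "rcosets (carrier G) \<subseteq> {carrier G}"
  proof
    fix C assume "C \<in> rcosets (carrier G)"
    then obtain x where x: "x \<in> carrier G" "C = carrier G #> x" unfolding RCOSETS_def by blast
    then have "C = carrier G" using coset_join2[OF x(1) subgroup_self x(1)] by simp
    then show "C \<in> {carrier G}" by simp
  qed
  then have "finite (rcosets (carrier G))" using finite_subset by blast
  then show ?thesis using n unfolding fin_index_normals_def by blast
qed

lemma fin_normals_Inter:
  assumes "group G" "finite F" "F \<subseteq> FN G" shows "carrier G \<inter> \<Inter>F \<in> FN G"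
  using assms(2,3)
proof (induction F rule: finite_induct)
  case empty then show ?case using carrier_FN[OF assms(1)] by simp
next
  case (insert N F)
  have "carrier G \<inter> \<Inter>(insert N F) = N \<inter> (carrier G \<inter> \<Inter>F)" by auto
  then show ?case using insert fin_normals_Int[OF assms(1)] by simp
qed



definition univsol :: "'a monoid \<Rightarrow> 'h monoid \<Rightarrow> nat \<Rightarrow> nat \<Rightarrow> word list \<Rightarrow> (nat \<Rightarrow> 'a set \<Rightarrow> 'a set) \<Rightarrow> 'a set \<Rightarrow> (nat \<Rightarrow> 'a set) \<Rightarrow> bool" where
"univsol G H k n ws a N v \<longleftrightarrow> (\<forall>f. (\<forall>i<k. f i \<in> carrier (G Mod N) \<rightarrow>\<^sub>E carrier H) \<longrightarrow>
   (\<exists>\<phi>. (\<forall>j<n. \<phi> j \<in> carrier (G Mod N) \<rightarrow>\<^sub>E carrier H) \<and>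
     (\<forall>w\<in>set ws. eval_word (wreath H (G Mod N)) (\<lambda>i. (f i, a i N)) (\<lambda>j. (\<phi> j, v j)) w = \<one>\<^bsub>wreath H (G Mod N)\<^esub>)))"

lemma univsol_cong:
  assumes "univsol G H k n ws a N v" "\<forall>w\<in>set ws. word_in k n w" "\<And>j. j<n \<Longrightarrow> v j = v' j"
  shows "univsol G H k n ws a N v'"
  unfolding univsol_def
proof (intro allI impI)
  fix f assume f: "\<forall>i<k. f i \<in> carrier (G Mod N) \<rightarrow>\<^sub>E carrier H"
  obtain \<phi> where \<phi>: "\<forall>j<n. \<phi> j \<in> carrier (G Mod N) \<rightarrow>\<^sub>E carrier H"
    "\<forall>w\<in>set ws. eval_word (wreath H (G Mod N)) (\<lambda>i. (f i, a i N)) (\<lambda>j. (\<phi> j, v j)) w = \<one>\<^bsub>wreath H (G Mod N)\<^esub>"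
    using mp[OF spec[OF assms(1)[unfolded univsol_def], of f] f] by (elim exE conjE) (rule that)
  have eq: "eval_word (wreath H (G Mod N)) (\<lambda>i. (f i, a i N)) (\<lambda>j. (\<phi> j, v j)) w =
            eval_word (wreath H (G Mod N)) (\<lambda>i. (f i, a i N)) (\<lambda>j. (\<phi> j, v' j)) w" if "w \<in> set ws" for w
    by (rule eval_word_cong[of k n]) (use assms(2,3) that in auto)
  show "\<exists>\<phi>. (\<forall>j<n. \<phi> j \<in> carrier (G Mod N) \<rightarrow>\<^sub>E carrier H) \<and>
     (\<forall>w\<in>set ws. eval_word (wreath H (G Mod N)) (\<lambda>i. (f i, a i N)) (\<lambda>j. (\<phi> j, v' j)) w = \<one>\<^bsub>wreath H (G Mod N)\<^esub>)"
    using \<phi> eq by auto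
qed

lemma wreath_group:
  assumes "group H" "group Q" shows "group (wreath H Q)"
proof -
  interpret Q: group Q by fact
  show ?thesis unfolding wreath_wr
    by (rule wr_group[OF assms]) (auto simp: Q.m_assoc)
qed

lemma wreath_carrier: "carrier (wreath H Q) = (carrier Q \<rightarrow>\<^sub>E carrier H) \<times> carrier Q"
  by (simp add: wreath_def)

lemma key:
  fixes G :: "'a monoid" and H :: "'h monoid"
  assumes G: "group G" and H: "group H" "finite (carrier H)"
    and ws: "\<forall>w\<in>set ws. word_in k n w" and sf: "sys_fin k n ws"
    and a: "\<forall>i<k. a i \<in> profinite_completion G"
    and M: "M \<in> FN G" and NN: "finite NN" "NN \<subseteq> FN G" "\<forall>N\<in>NN. M \<subseteq> N"
  shows "\<exists>s. (\<forall>j<n. s j \<in> carrier (G Mod M)) \<and> (\<forall>N\<in>NN. univsol G H k n ws a N (\<lambda>j. N <#>\<^bsub>G\<^esub> s j))"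
proof -
  define T where "T = (\<lambda>N. {..<k} \<rightarrow>\<^sub>E (carrier (G Mod N) \<rightarrow>\<^sub>E carrier H))"
  define Y where "Y = (SIGMA N:NN. SIGMA t:T N. carrier (G Mod N))"
  define act where "act = (\<lambda>(N::'a set, t::nat \<Rightarrow> 'a set \<Rightarrow> 'h, y::'a set) (g::'a set). (N, t, y <#>\<^bsub>G\<^esub> (N <#>\<^bsub>G\<^esub> g)))"
  define Q where "Q = wr H (G Mod M) Y act"
  have gM: "group (G Mod M)" and fM: "finite (carrier (G Mod M))" using fin_normals_basic[OF G M] by auto
  have gN: "group (G Mod N)" if "N \<in> NN" for N using fin_normals_basic[OF G] that NN by blast
  have fN: "finite (carrier (G Mod N))" if "N \<in> NN" for N using fin_normals_basic[OF G] that NN by blast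
  have ph: "(\<lambda>C. N <#>\<^bsub>G\<^esub> C) \<in> hom (G Mod M) (G Mod N)" if "N \<in> NN" for N
    using proj_hom[OF G] fin_normals_basic(3)[OF G] M NN that by blast
  have pc: "N <#>\<^bsub>G\<^esub> g \<in> carrier (G Mod N)" if "N \<in> NN" "g \<in> carrier (G Mod M)" for N g
    using hom_in_carrier[OF ph[OF that(1)] that(2)] .
  have p1: "N <#>\<^bsub>G\<^esub> M = N" if "N \<in> NN" for N
    using hom_one[OF ph[OF that] gM gN[OF that]] by simp
  have pm: "N <#>\<^bsub>G\<^esub> (g <#>\<^bsub>G\<^esub> g') = (N <#>\<^bsub>G\<^esub> g) <#>\<^bsub>G\<^esub> (N <#>\<^bsub>G\<^esub> g')"
    if "N \<in> NN" "g \<in> carrier (G Mod M)" "g' \<in> carrier (G Mod M)" for N g g'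
    using hom_mult[OF ph[OF that(1)] that(2,3)] by simp
  have gQ: "group Q" unfolding Q_def
  proof (rule wr_group[OF H(1) gM])
    fix x g assume x: "x \<in> Y" and g: "g \<in> carrier (G Mod M)"
    then obtain N t y where xx: "x = (N,t,y)" "N \<in> NN" "t \<in> T N" "y \<in> carrier (G Mod N)" by (auto simp: Y_def)
    have "y \<otimes>\<^bsub>G Mod N\<^esub> (N <#>\<^bsub>G\<^esub> g) \<in> carrier (G Mod N)"
      using group.is_monoid[OF gN[OF xx(2)]] xx(4) pc[OF xx(2) g] by (rule monoid.m_closed)
    then show "act x g \<in> Y" using xx by (simp add: act_def Y_def)
  next
    fix x assume x: "x \<in> Y"
    then obtain N t y where xx: "x = (N,t,y)" "N \<in> NN" "t \<in> T N" "y \<in> carrier (G Mod N)" by (auto simp: Y_def)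
    have "y \<otimes>\<^bsub>G Mod N\<^esub> \<one>\<^bsub>G Mod N\<^esub> = y" using group.is_monoid[OF gN[OF xx(2)]] xx(4) by (rule monoid.r_one)
    then show "act x \<one>\<^bsub>G Mod M\<^esub> = x" using xx p1 by (simp add: act_def)
  next
    fix x g g' assume x: "x \<in> Y" and g: "g \<in> carrier (G Mod M)" "g' \<in> carrier (G Mod M)"
    then obtain N t y where xx: "x = (N,t,y)" "N \<in> NN" "t \<in> T N" "y \<in> carrier (G Mod N)" by (auto simp: Y_def)
    have "(y \<otimes>\<^bsub>G Mod N\<^esub> (N <#>\<^bsub>G\<^esub> g)) \<otimes>\<^bsub>G Mod N\<^esub> (N <#>\<^bsub>G\<^esub> g') = y \<otimes>\<^bsub>G Mod N\<^esub> ((N <#>\<^bsub>G\<^esub> g) \<otimes>\<^bsub>G Mod N\<^esub> (N <#>\<^bsub>G\<^esub> g'))"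
      using group.is_monoid[OF gN[OF xx(2)]] xx(4) pc[OF xx(2) g(1)] pc[OF xx(2) g(2)] by (rule monoid.m_assoc)
    then show "act (act x g) g' = act x (g \<otimes>\<^bsub>G Mod M\<^esub> g')" using xx pm[OF xx(2) g] by (simp add: act_def)
  qed
  have fT: "finite (T N)" if "N \<in> NN" for N
    unfolding T_def using fN[OF that] H(2) by (intro finite_PiE) auto
  have fY: "finite Y" unfolding Y_def using NN(1) fT fN by (intro finite_SigmaI) auto
  have fQ: "finite (carrier Q)" unfolding Q_def wr_def using fY H(2) fM by (simp add: finite_PiE)
  define c where "c = (\<lambda>i. ((\<lambda>x\<in>Y. case x of (N,t,y) \<Rightarrow> t i y), a i M))"
  have cc: "\<forall>i<k. c i \<in> carrier Q"
  proof (intro allI impI)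
    fix i assume i: "i < k"
    have "a i M \<in> carrier (G Mod M)" using a i M unfolding profinite_completion_def by blast
    moreover have "(\<lambda>x\<in>Y. case x of (N,t,y) \<Rightarrow> t i y) \<in> Y \<rightarrow>\<^sub>E carrier H"
      using i by (auto simp: Y_def T_def PiE_iff)
    ultimately show "c i \<in> carrier Q" by (simp add: c_def Q_def wr_def)
  qed
  obtain z where zc: "\<forall>j<n. z j \<in> carrier Q" and zs: "\<forall>w\<in>set ws. eval_word Q c z w = \<one>\<^bsub>Q\<^esub>"
    using sys_fin_any[OF sf gQ fQ ws cc] by blast
  define s where "s = (\<lambda>j. snd (z j))"
  have sc: "\<forall>j<n. s j \<in> carrier (G Mod M)" using zc by (auto simp: s_def Q_def wr_def)
  have "univsol G H k n ws a N (\<lambda>j. N <#>\<^bsub>G\<^esub> s j)" if N: "N \<in> NN" for N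
    unfolding univsol_def
  proof (intro allI impI)
    fix f assume f: "\<forall>i<k. f i \<in> carrier (G Mod N) \<rightarrow>\<^sub>E carrier H"
    define t where "t = restrict f {..<k}"
    have tT: "t \<in> T N" using f by (simp add: t_def T_def)
    define \<psi> where "\<psi> = (\<lambda>(F::('a set \<times> (nat \<Rightarrow> 'a set \<Rightarrow> 'h) \<times> 'a set) \<Rightarrow> 'h, g::'a set). ((\<lambda>y\<in>carrier (G Mod N). F (N,t,y)), N <#>\<^bsub>G\<^esub> g))"
    have gW: "group (wreath H (G Mod N))" using wreath_group[OF H(1) gN[OF N]] .
    have hom: "\<psi> \<in> hom Q (wreath H (G Mod N))" unfolding Q_def wreath_wr \<psi>_def
    proof (rule wr_hom[OF ph[OF N]])
      show "\<And>y. y \<in> carrier (G Mod N) \<Longrightarrow> (N, t, y) \<in> Y" using N tT by (simp add: Y_def)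
      show "\<And>y q. y \<in> carrier (G Mod N) \<Longrightarrow> q \<in> carrier (G Mod N) \<Longrightarrow> y \<otimes>\<^bsub>G Mod N\<^esub> q \<in> carrier (G Mod N)"
        using group.is_monoid[OF gN[OF N]] by (rule monoid.m_closed)
      show "\<And>y g. y \<in> carrier (G Mod N) \<Longrightarrow> g \<in> carrier (G Mod M) \<Longrightarrow> act (N, t, y) g = (N, t, y \<otimes>\<^bsub>G Mod N\<^esub> (N <#>\<^bsub>G\<^esub> g))"
        by (simp add: act_def)
    qed
    define \<phi> where "\<phi> = (\<lambda>j. fst (\<psi> (z j)))"
    have \<psi>z: "\<psi> (z j) = (\<phi> j, N <#>\<^bsub>G\<^esub> s j)" for j
      by (cases "z j") (simp add: \<phi>_def s_def \<psi>_def)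
    have \<psi>c: "\<psi> (c i) = (f i, a i N)" if i: "i < k" for i
    proof -
      have fi: "f i \<in> carrier (G Mod N) \<rightarrow>\<^sub>E carrier H" using f i by blast
      have "(\<lambda>y\<in>carrier (G Mod N). t i y) = f i" using fi i by (simp add: t_def)
      moreover have "N <#>\<^bsub>G\<^esub> a i M = a i N"
        using proj_profinite[OF G _ M] a i N NN by blast
      ultimately show ?thesis using N tT by (simp add: \<psi>_def c_def Y_def restrict_def cong: if_cong)
    qed
    show "\<exists>\<phi>. (\<forall>j<n. \<phi> j \<in> carrier (G Mod N) \<rightarrow>\<^sub>E carrier H) \<and>
       (\<forall>w\<in>set ws. eval_word (wreath H (G Mod N)) (\<lambda>i. (f i, a i N)) (\<lambda>j. (\<phi> j, N <#>\<^bsub>G\<^esub> s j)) w = \<one>\<^bsub>wreath H (G Mod N)\<^esub>)"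
    proof (intro exI conjI allI impI ballI)
      fix j assume j: "j < n"
      have "\<psi> (z j) \<in> carrier (wreath H (G Mod N))" using hom_in_carrier[OF hom] zc j by blast
      then show "\<phi> j \<in> carrier (G Mod N) \<rightarrow>\<^sub>E carrier H" using \<psi>z[of j] by (simp add: wreath_carrier)
    next
      fix w assume w: "w \<in> set ws"
      have wi: "word_in k n w" using ws w by blast
      have "eval_word (wreath H (G Mod N)) (\<lambda>i. (f i, a i N)) (\<lambda>j. (\<phi> j, N <#>\<^bsub>G\<^esub> s j)) w
          = eval_word (wreath H (G Mod N)) (\<psi> \<circ> c) (\<psi> \<circ> z) w"
        by (rule eval_word_cong[OF wi]) (simp_all add: \<psi>c \<psi>z)
      also have "\<dots> = \<psi> (eval_word Q c z w)"
        by (rule eval_word_hom[OF gQ gW hom wi cc zc, symmetric])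
      also have "\<dots> = \<one>\<^bsub>wreath H (G Mod N)\<^esub>" using zs w hom_one[OF hom gQ gW] by simp
      finally show "eval_word (wreath H (G Mod N)) (\<lambda>i. (f i, a i N)) (\<lambda>j. (\<phi> j, N <#>\<^bsub>G\<^esub> s j)) w = \<one>\<^bsub>wreath H (G Mod N)\<^esub>" .
    qed
  qed
  then show ?thesis using sc by blast
qed



lemma proj_carrier:
  assumes "group G" "M \<in> FN G" "N \<in> FN G" "M \<subseteq> N" "g \<in> carrier (G Mod M)"
  shows "N <#>\<^bsub>G\<^esub> g \<in> carrier (G Mod N)"
proof -
  have "(\<lambda>C. N <#>\<^bsub>G\<^esub> C) \<in> hom (G Mod M) (G Mod N)"
    using proj_hom[OF assms(1) fin_normals_basic(3)[OF assms(1,2)] fin_normals_basic(3)[OF assms(1,3)] assms(4)] .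
  from hom_in_carrier[OF this assms(5)] show ?thesis .
qed

lemma set_mult_mono:
  assumes "N \<subseteq> N'" shows "N <#>\<^bsub>G\<^esub> C \<subseteq> N' <#>\<^bsub>G\<^esub> C"
  using assms unfolding set_mult_def by blast

theorem lemma2:
  fixes G :: "'a monoid" and H :: "'h monoid"
    and k n :: nat and ws :: "word list" and a :: "nat \<Rightarrow> ('a set \<Rightarrow> 'a set)"
  assumes "group G" and "finitely_generated G" and "residually_finite G"
    and "group H" and "finite (carrier H)"
    and "\<forall>w \<in> set ws. word_in k n w"
    and "sys_fin k n ws"
    and "\<forall>i<k. a i \<in> profinite_completion G"
  shows "\<exists>u. (\<forall>j<n. u j \<in> profinite_completion G) \<and>
           (\<forall>N \<in> fin_index_normals G. \<forall>f.
              (\<forall>i<k. f i \<in> carrier (G Mod N) \<rightarrow>\<^sub>E carrier H) \<longrightarrow>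
              (\<exists>\<phi>. (\<forall>j<n. \<phi> j \<in> carrier (G Mod N) \<rightarrow>\<^sub>E carrier H) \<and>
                  (\<forall>w \<in> set ws.
                     eval_word (wreath H (G Mod N)) (\<lambda>i. (f i, a i N)) (\<lambda>j. (\<phi> j, u j N)) w
                       = \<one>\<^bsub>wreath H (G Mod N)\<^esub>)))"
proof -
  note G = assms(1) and H = assms(4,5) and ws = assms(6) and sf = assms(7) and a = assms(8)
  define U where "U = (\<lambda>N. {v \<in> {..<n} \<rightarrow>\<^sub>E carrier (G Mod N). univsol G H k n ws a N v})"
  have tupU: "(\<lambda>j\<in>{..<n}. N <#>\<^bsub>G\<^esub> s j) \<in> U N"
    if "M \<in> FN G" "N \<in> FN G" "M \<subseteq> N" "\<forall>j<n. s j \<in> carrier (G Mod M)"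
       "univsol G H k n ws a N (\<lambda>j. N <#>\<^bsub>G\<^esub> s j)" for M N s
  proof -
    have "(\<lambda>j\<in>{..<n}. N <#>\<^bsub>G\<^esub> s j) \<in> {..<n} \<rightarrow>\<^sub>E carrier (G Mod N)"
      using proj_carrier[OF G that(1,2,3)] that(4) by auto
    moreover have "univsol G H k n ws a N (\<lambda>j\<in>{..<n}. N <#>\<^bsub>G\<^esub> s j)"
      by (rule univsol_cong[OF that(5) ws]) simp
    ultimately show ?thesis by (simp add: U_def)
  qed
  have Une: "\<exists>v. v \<in> U N" if N: "N \<in> FN G" for N
  proof -
    obtain s where s: "\<forall>j<n. s j \<in> carrier (G Mod N)" "\<forall>N'\<in>{N}. univsol G H k n ws a N' (\<lambda>j. N' <#>\<^bsub>G\<^esub> s j)"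
      using key[OF G H ws sf a N, of "{N}"] N by auto
    show ?thesis using tupU[OF N N _ s(1)] s(2) by blast
  qed
  have fU: "finite (U N)" if N: "N \<in> FN G" for N
  proof -
    have "U N \<subseteq> {..<n} \<rightarrow>\<^sub>E carrier (G Mod N)" by (auto simp: U_def)
    moreover have "finite ({..<n} \<rightarrow>\<^sub>E carrier (G Mod N))"
      using fin_normals_basic(2)[OF G N] by (intro finite_PiE) auto
    ultimately show ?thesis by (rule finite_subset)
  qed
  define TT where "TT = product_topology (\<lambda>N. discrete_topology (U N)) (FN G)"
  have topTT: "topspace TT = (\<Pi>\<^sub>E N\<in>FN G. U N)" by (simp add: TT_def)
  have cpt: "compact_space TT" unfolding TT_def compact_space_product_topology
    using fU by (simp add: compact_space_discrete_topology)
  define D where "D = (\<lambda>N N'. {p \<in> topspace TT. \<forall>j<n. p N j \<subseteq> p N' j})"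
  define PP where "PP = {(N,N'). N \<in> FN G \<and> N' \<in> FN G \<and> N \<subseteq> N'}"
  define UU where "UU = (\<lambda>(N,N'). D N N') ` PP"
  have closed: "closedin TT (D N N')" if "N \<in> FN G" "N' \<in> FN G" for N N'
  proof -
    have cm: "continuous_map TT (prod_topology (discrete_topology (U N)) (discrete_topology (U N'))) (\<lambda>p. (p N, p N'))"
      unfolding TT_def by (intro continuous_map_pairedI continuous_map_product_projection that)
    define C where "C = {(v,v'). v \<in> U N \<and> v' \<in> U N' \<and> (\<forall>j<n. v j \<subseteq> v' j)}"
    have "closedin (prod_topology (discrete_topology (U N)) (discrete_topology (U N'))) C"
      unfolding prod_topology_discrete_topology[symmetric] by (auto simp: C_def)
    from closedin_continuous_map_preimage[OF cm this]
    have "closedin TT {p \<in> topspace TT. (p N, p N') \<in> C}" .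
    moreover have "{p \<in> topspace TT. (p N, p N') \<in> C} = D N N'"
      using that by (auto simp: C_def D_def topTT)
    ultimately show ?thesis by simp
  qed
  have fip: "\<Inter>F \<noteq> {}" if F: "finite F" "F \<subseteq> UU" for F
  proof -
    obtain P where P: "P \<subseteq> PP" "finite P" "F = (\<lambda>(N,N'). D N N') ` P"
      using finite_subset_image[OF F(1) F(2)[unfolded UU_def]] by blast
    define NN where "NN = fst ` P \<union> snd ` P"
    have NN: "finite NN" "NN \<subseteq> FN G" using P(1,2) by (auto simp: NN_def PP_def)
    define M where "M = carrier G \<inter> \<Inter>NN"
    have M: "M \<in> FN G" unfolding M_def by (rule fin_normals_Inter[OF G NN])
    have MN: "\<forall>N\<in>NN. M \<subseteq> N" by (auto simp: M_def)
    obtain s where s: "\<forall>j<n. s j \<in> carrier (G Mod M)" "\<forall>N\<in>NN. univsol G H k n ws a N (\<lambda>j. N <#>\<^bsub>G\<^esub> s j)"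
      using key[OF G H ws sf a M NN MN] by blast
    define p where "p = (\<lambda>N\<in>FN G. if N \<in> NN then (\<lambda>j\<in>{..<n}. N <#>\<^bsub>G\<^esub> s j) else (SOME v. v \<in> U N))"
    have pT: "p \<in> topspace TT" unfolding topTT
    proof (rule PiE_I)
      fix N assume N: "N \<in> FN G"
      show "p N \<in> U N"
      proof (cases "N \<in> NN")
        case True
        then show ?thesis using N tupU[OF M N _ s(1)] MN s(2) by (simp add: p_def)
      next
        case False
        then show ?thesis using N someI_ex[OF Une[OF N]] by (simp add: p_def)
      qed
    next
      fix N assume "N \<notin> FN G" then show "p N = undefined" by (simp add: p_def)
    qed
    have "p \<in> D N N'" if "(N,N') \<in> P" for N N'
    proof -
      have NN': "N \<in> NN" "N' \<in> NN" using that by (force simp: NN_def)+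
      have sub: "N \<subseteq> N'" "N \<in> FN G" "N' \<in> FN G" using that P(1) by (auto simp: PP_def)
      have "\<forall>j<n. p N j \<subseteq> p N' j" using NN' sub by (simp add: p_def set_mult_mono)
      then show ?thesis using pT by (simp add: D_def)
    qed
    then have "p \<in> \<Inter>F" using P(3) by auto
    then show ?thesis by blast
  qed
  have "\<Inter>UU \<noteq> {}"
    using cpt[unfolded compact_space_fip, rule_format, of UU] closed fip
    by (auto simp: UU_def PP_def)
  then obtain p where p: "p \<in> \<Inter>UU" by blast
  have cG: "carrier G \<in> FN G" by (rule carrier_FN[OF G])
  have pD: "p \<in> D N N'" if "N \<in> FN G" "N' \<in> FN G" "N \<subseteq> N'" for N N'
    using p that by (auto simp: UU_def PP_def)
  have pT: "p \<in> topspace TT" using pD[OF cG cG] by (simp add: D_def)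
  have pU: "p N \<in> U N" if "N \<in> FN G" for N using pT that by (auto simp: topTT)
  define u where "u = (\<lambda>j N. if N \<in> FN G then p N j else undefined)"
  show ?thesis
  proof (rule exI[of _ u], intro conjI allI impI ballI)
    fix j assume j: "j < n"
    show "u j \<in> profinite_completion G" unfolding profinite_completion_def
    proof (intro CollectI conjI ballI allI impI)
      fix N assume N: "N \<in> FN G"
      show "u j N \<in> carrier (G Mod N)" using pU[OF N] j N by (auto simp: U_def u_def)
    next
      fix N N' assume "N \<in> FN G" "N' \<in> FN G" "N \<subseteq> N'"
      then show "u j N \<subseteq> u j N'" using pD[of N N'] j by (simp add: D_def u_def)
    next
      fix N assume "N \<notin> FN G" then show "u j N = undefined" by (simp add: u_def)
    qed
  next
    fix N f assume N: "N \<in> FN G" and f: "\<forall>i<k. f i \<in> carrier (G Mod N) \<rightarrow>\<^sub>E carrier H"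
    have "univsol G H k n ws a N (p N)" using pU[OF N] by (simp add: U_def)
    then have us: "univsol G H k n ws a N (\<lambda>j. u j N)"
      by (rule univsol_cong[OF _ ws]) (simp add: u_def N)
    show "\<exists>\<phi>. (\<forall>j<n. \<phi> j \<in> carrier (G Mod N) \<rightarrow>\<^sub>E carrier H) \<and>
                  (\<forall>w \<in> set ws.
                     eval_word (wreath H (G Mod N)) (\<lambda>i. (f i, a i N)) (\<lambda>j. (\<phi> j, u j N)) w
                       = \<one>\<^bsub>wreath H (G Mod N)\<^esub>)"
      using mp[OF spec[OF us[unfolded univsol_def], of f] f] by simp
  qed
qed

end
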